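(* Let $n\in\mathbb{N}$, $\alpha\in\mathbb{R}$ with $n<\alpha\le n+1$, $k\in\mathbb{N}$, $\mu\in\mathbb{R}$ with $\mu>-1$, and $T>0$. Put $\gamma_{n,k,\mu,\alpha}=\frac{\Gamma(\alpha-n)}{\mathrm{B}(\alpha+1+k,\,n+\mu+2)}$ and, for a function $g$ integrable on $[t_0,t_0+T]$, $$\tilde g^{(\alpha)}_{t_0}(k,\mu,T):=\frac{(n+1)!}{T^{\alpha}}\,\gamma_{n,k,\mu,\alpha}\int_0^1 w_{\mu,k}(\tau)\,P^{(\mu,k)}_{n+1}(\tau)\,g(t_0+T\tau)\,d\tau .$$ Let $y=x+\varpi$ be a noisy signal observed on an open interval $I\subset\mathbb{R}$, where $x\in\mathcal{C}^n(I)$ and $\varpi$ is a bounded integrable noise, let $t_0\in I$ and $T\in D_{t_0}=\{t\in\mathbb{R}_+:\ t_0+t\in I\}$. Then $\tilde y^{(\alpha)}_{t_0}(k,\mu,T)$ is an estimator of the Jumarie derivative value $x^{(\alpha)}(t_0)$, in the sense that if $y$ is replaced by the truncated fractional Taylor expansion $$x_\alpha(t_0+t)=\sum_{j=0}^{n}\frac{t^j}{j!}x^{(j)}(t_0)+\frac{t^{\alpha}}{\Gamma(\alpha+1)}x^{(\alpha)}(t_0),\qquad t\ge 0,$$ the formula is exact: $\tilde{(x_\alpha)}^{(\alpha)}_{t_0}(k,\mu,T)=x^{(\alpha)}(t_0)$.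
   Context: $\mathrm{B}$ is the Euler beta function. $P^{(\mu,k)}_{m}$ denotes the shifted Jacobi polynomial on $[0,1]$: $P^{(\mu,k)}_{m}(\tau)=\sum_{j=0}^{m}\binom{m+\mu}{j}\binom{m+k}{m-j}(\tau-1)^{m-j}\tau^{j}$, with weight $w_{\mu,k}(\tau)=(1-\tau)^{\mu}\tau^{k}$. The fractional derivative is Jumarie's modified Riemann–Liouville derivative: for continuous $f$ and $0\le l-1\le\beta<l$, $l\in\mathbb{N}^*$, $f^{(\beta)}(t)=\frac{1}{\Gamma(l-\beta)}\frac{d^l}{dt^l}\int_0^t\frac{f(\tau)-f(0)}{(t-\tau)^{\beta+1-l}}d\tau$; for $n<\alpha\le n+1$, $x^{(\alpha)}$ means $(x^{(n)})^{(\alpha-n)}$, taken at the point $t_0$ (i.e. with base point $t_0$). The values $x^{(j)}(t_0)$, $0\le j\le n$, are ordinary derivatives. *)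

theory Defs
  imports "HOL-Analysis.Analysis"
begin

definition jacobi_shift :: "nat \<Rightarrow> real \<Rightarrow> nat \<Rightarrow> real \<Rightarrow> real" where
  "jacobi_shift m \<mu> k \<tau> =
     (\<Sum>j=0..m. ((real m + \<mu>) gchoose j) * real ((m + k) choose (m - j))
                 * (\<tau> - 1) ^ (m - j) * \<tau> ^ j)"

definition jacobi_weight :: "real \<Rightarrow> nat \<Rightarrow> real \<Rightarrow> real" where
  "jacobi_weight \<mu> k \<tau> = (1 - \<tau>) powr \<mu> * \<tau> ^ k"

definition gamma_const :: "nat \<Rightarrow> nat \<Rightarrow> real \<Rightarrow> real \<Rightarrow> real" where
  "gamma_const n k \<mu> \<alpha> = Gamma (\<alpha> - real n) / Beta (\<alpha> + 1 + real k) (real n + \<mu> + 2)"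

definition frac_estimator ::
  "nat \<Rightarrow> real \<Rightarrow> nat \<Rightarrow> real \<Rightarrow> real \<Rightarrow> real \<Rightarrow> (real \<Rightarrow> real) \<Rightarrow> real" where
  "frac_estimator n \<alpha> k \<mu> T t0 g =
     fact (n + 1) / T powr \<alpha> * gamma_const n k \<mu> \<alpha> *
     integral {0..1} (\<lambda>\<tau>. jacobi_weight \<mu> k \<tau> * jacobi_shift (n + 1) \<mu> k \<tau> * g (t0 + T * \<tau>))"

text \<open>Jumarie's modified Riemann-Liouville derivative of order beta (beta \<ge> 0),
  base point t0, evaluated at t; l = floor beta + 1, so l - 1 \<le> beta < l.\<close>
definition jumarie :: "real \<Rightarrow> (real \<Rightarrow> real) \<Rightarrow> real \<Rightarrow> real \<Rightarrow> real" where
  "jumarie \<beta> f t0 t =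
     (let l = nat \<lfloor>\<beta>\<rfloor> + 1 in
       1 / Gamma (real l - \<beta>) *
       (deriv ^^ l) (\<lambda>s. integral {t0..s} (\<lambda>\<tau>. (f \<tau> - f t0) / (s - \<tau>) powr (\<beta> + 1 - real l))) t)"

text \<open>x^(alpha)(t0) for n < alpha \<le> n+1: (x^(n))^(alpha - n) with base point t0.\<close>
definition jumarie_ho :: "nat \<Rightarrow> real \<Rightarrow> (real \<Rightarrow> real) \<Rightarrow> real \<Rightarrow> real" where
  "jumarie_ho n \<alpha> x t0 = jumarie (\<alpha> - real n) ((deriv ^^ n) x) t0 t0"

definition Cn_on :: "nat \<Rightarrow> real set \<Rightarrow> (real \<Rightarrow> real) \<Rightarrow> bool" where
  "Cn_on n I x \<longleftrightarrow>
     (\<forall>j<n. \<forall>t\<in>I. ((deriv ^^ j) x has_real_derivative (deriv ^^ Suc j) x t) (at t))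
     \<and> continuous_on I ((deriv ^^ n) x)"

definition frac_taylor :: "nat \<Rightarrow> real \<Rightarrow> (real \<Rightarrow> real) \<Rightarrow> real \<Rightarrow> real \<Rightarrow> real" where
  "frac_taylor n \<alpha> x t0 s =
     (\<Sum>j=0..n. (s - t0) ^ j / fact j * (deriv ^^ j) x t0)
     + (s - t0) powr \<alpha> / Gamma (\<alpha> + 1) * jumarie_ho n \<alpha> x t0"

end

theory Submission imports Defs "HOL-Computational_Algebra.Formal_Power_Series" begin

lemma comb_id:
  fixes \<beta> \<mu> :: real and m k :: nat
  assumes "\<mu> > -1" "\<beta> \<ge> 0"
  shows "(\<Sum>j=0..m. ((real m + \<mu>) gchoose j) * real ((m + k) choose (m - j)) * (-1)^(m-j)
            * Beta (real k + \<beta> + real j + 1) (\<mu> + real (m - j) + 1))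
         = (\<beta> gchoose m) * Beta (\<beta> + real k + 1) (\<mu> + real m + 1)"
proof -
  define c where "c = real k + \<beta> + 1"
  define S where "S = Gamma (c + \<mu> + real m + 1)"
  have cpos: "c > 0" using assms by (simp add: c_def)
  have c_np: "c \<notin> \<int>\<^sub>\<le>\<^sub>0" using cpos by (metis not_le nonpos_Ints_nonpos)
  have tm: "((real m + \<mu>) gchoose j) * real ((m + k) choose (m - j)) * (-1)^(m-j)
            * Beta (real k + \<beta> + real j + 1) (\<mu> + real (m - j) + 1)
        = (-1)^m * (((-c) gchoose j) * (real (m+k) gchoose (m - j))) * (Gamma c * Gamma (\<mu> + real m + 1) / S)"
    if j: "j \<in> {0..m}" for j
  proof -
    have jm: "j \<le> m" using j by simp
    have p1: "Gamma (real k + \<beta> + real j + 1) = pochhammer c j * Gamma c"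
      proof -
        have "Gamma c > 0" using cpos by simp
        then show ?thesis using pochhammer_Gamma[OF c_np, of j] by (simp add: c_def field_simps)
      qed
    have np2: "\<mu> + real (m - j) + 1 \<notin> \<int>\<^sub>\<le>\<^sub>0"
    proof -
      have "\<mu> + real (m - j) + 1 > 0" using assms by simp
      then show ?thesis by (auto dest: nonpos_Ints_nonpos)
    qed
    have p2: "((real m + \<mu>) gchoose j) * Gamma (\<mu> + real (m - j) + 1) = Gamma (\<mu> + real m + 1) / fact j"
    proof -
      have "((real m + \<mu>) gchoose j) = pochhammer (\<mu> + real (m - j) + 1) j / fact j"
        using jm by (simp add: gbinomial_pochhammer' of_nat_diff algebra_simps)
      moreover have "pochhammer (\<mu> + real (m - j) + 1) j = Gamma (\<mu> + real m + 1) / Gamma (\<mu> + real (m - j) + 1)"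
        using pochhammer_Gamma[OF np2, of j] jm by (simp add: of_nat_diff algebra_simps)
      moreover have "Gamma (\<mu> + real (m - j) + 1) > 0" using assms by (intro Gamma_real_pos) simp
      ultimately show ?thesis by simp
    qed
    have S': "Gamma (real k + \<beta> + real j + 1 + (\<mu> + real (m - j) + 1)) = S"
      using jm by (simp add: S_def c_def of_nat_diff algebra_simps)
    have g: "((-c) gchoose j) = (-1)^j * pochhammer c j / fact j"
      by (simp add: gbinomial_pochhammer)
    have bc: "real ((m + k) choose (m - j)) = (real (m+k) gchoose (m - j))"
      by (simp add: binomial_gbinomial)
    have sgn: "(-1::real)^(m-j) = (-1)^m * (-1)^j"
    proof -
      obtain d where md: "m = j + d" using jm le_Suc_ex by blast
      have "(-1::real)^m * (-1)^j = (-1)^(d + 2*j)" by (simp add: md power_add)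
      also have "\<dots> = (-1)^d" by (simp add: power_add power_mult)
      finally show ?thesis by (simp add: md)
    qed
    show ?thesis
    proof -
      have p2': "Gamma (\<mu> + real m + 1) = fact j * (((real m + \<mu>) gchoose j) * Gamma (\<mu> + real (m - j) + 1))"
        using p2 by (simp add: field_simps)
      show ?thesis unfolding Beta_def S' p1 g bc sgn p2' by (simp add: field_simps)
    qed
  qed
  have "(\<Sum>j=0..m. ((real m + \<mu>) gchoose j) * real ((m + k) choose (m - j)) * (-1)^(m-j)
            * Beta (real k + \<beta> + real j + 1) (\<mu> + real (m - j) + 1))
      = (-1)^m * (\<Sum>j=0..m. ((-c) gchoose j) * (real (m+k) gchoose (m - j))) * (Gamma c * Gamma (\<mu> + real m + 1) / S)"
    by (simp only: sum.cong[OF refl tm] sum_distrib_left[symmetric] sum_distrib_right[symmetric])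
  also have "(\<Sum>j=0..m. ((-c) gchoose j) * (real (m+k) gchoose (m - j))) = (real m - \<beta> - 1) gchoose m"
    by (subst gbinomial_Vandermonde) (simp add: c_def algebra_simps)
  also have "(-1)^m * ((real m - \<beta> - 1) gchoose m) = \<beta> gchoose m"
    by (simp add: gbinomial_negated_upper[of \<beta> m])
  finally show ?thesis
    by (simp add: Beta_def S_def c_def algebra_simps)
qed
lemma pointwise:
  fixes \<beta> \<mu> \<tau> :: real and m k :: nat
  assumes "0 < \<tau>" "\<tau> < 1"
  shows "jacobi_weight \<mu> k \<tau> * jacobi_shift m \<mu> k \<tau> * \<tau> powr \<beta> =
    (\<Sum>j=0..m. (((real m + \<mu>) gchoose j) * real ((m + k) choose (m - j)) * (-1)^(m-j)) *
       (\<tau> powr ((real k + \<beta> + real j + 1) - 1) * (1 - \<tau>) powr ((\<mu> + real (m - j) + 1) - 1)))"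
  (is "_ = ?rhs")
proof -
  have t1: "(\<tau> - 1)^(m-j) = (-1)^(m-j) * (1 - \<tau>) powr real (m - j)" for j
  proof -
    have "(\<tau> - 1)^(m-j) = (-(1-\<tau>))^(m-j)" by simp
    also have "\<dots> = (-1)^(m-j) * (1-\<tau>)^(m-j)" by (rule power_minus)
    finally show ?thesis using assms by (simp add: powr_realpow)
  qed
  have t2: "\<tau> ^ n = \<tau> powr real n" for n using assms by (simp add: powr_realpow)
  have "jacobi_weight \<mu> k \<tau> * jacobi_shift m \<mu> k \<tau> * \<tau> powr \<beta> =
     (\<Sum>j=0..m. ((1 - \<tau>) powr \<mu> * \<tau> ^ k) * (((real m + \<mu>) gchoose j) * real ((m + k) choose (m - j))
                 * (\<tau> - 1) ^ (m - j) * \<tau> ^ j) * \<tau> powr \<beta>)"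
    unfolding jacobi_weight_def jacobi_shift_def by (simp add: sum_distrib_left sum_distrib_right)
  also have "\<dots> = ?rhs"
  proof (rule sum.cong[OF refl])
    fix j assume "j \<in> {0..m}"
    have e1: "\<tau> powr ((real k + \<beta> + real j + 1) - 1) = \<tau> ^ k * \<tau> ^ j * \<tau> powr \<beta>"
      unfolding t2 using assms by (simp add: powr_add[symmetric] algebra_simps)
    have e2: "(1 - \<tau>) powr ((\<mu> + real (m - j) + 1) - 1) = (1 - \<tau>) powr \<mu> * (1 - \<tau>) powr real (m - j)"
      by (simp add: powr_add[symmetric])
    show "((1 - \<tau>) powr \<mu> * \<tau> ^ k) * (((real m + \<mu>) gchoose j) * real ((m + k) choose (m - j))
                 * (\<tau> - 1) ^ (m - j) * \<tau> ^ j) * \<tau> powr \<beta> =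
       (((real m + \<mu>) gchoose j) * real ((m + k) choose (m - j)) * (-1)^(m-j)) *
       (\<tau> powr ((real k + \<beta> + real j + 1) - 1) * (1 - \<tau>) powr ((\<mu> + real (m - j) + 1) - 1))"
      unfolding e1 e2 t1 by (simp add: mult_ac)
  qed
  finally show ?thesis .
qed

lemma L:
  fixes \<beta> \<mu> :: real and m k :: nat
  assumes "\<mu> > -1" "\<beta> \<ge> 0"
  shows "((\<lambda>\<tau>. jacobi_weight \<mu> k \<tau> * jacobi_shift m \<mu> k \<tau> * \<tau> powr \<beta>) has_integral
           ((\<beta> gchoose m) * Beta (\<beta> + real k + 1) (\<mu> + real m + 1))) {0<..<1}"
proof -
  let ?G = "\<lambda>\<tau>. (\<Sum>j=0..m. (((real m + \<mu>) gchoose j) * real ((m + k) choose (m - j)) * (-1)^(m-j)) *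
       (\<tau> powr ((real k + \<beta> + real j + 1) - 1) * (1 - \<tau>) powr ((\<mu> + real (m - j) + 1) - 1)))"
  have cong: "\<And>\<tau>. \<tau> \<in> {0<..<1} \<Longrightarrow> jacobi_weight \<mu> k \<tau> * jacobi_shift m \<mu> k \<tau> * \<tau> powr \<beta> = ?G \<tau>"
    by (rule pointwise) auto
  have "((\<lambda>\<tau>. (\<Sum>j=0..m. (((real m + \<mu>) gchoose j) * real ((m + k) choose (m - j)) * (-1)^(m-j)) *
       (\<tau> powr ((real k + \<beta> + real j + 1) - 1) * (1 - \<tau>) powr ((\<mu> + real (m - j) + 1) - 1))))
     has_integral (\<Sum>j=0..m. (((real m + \<mu>) gchoose j) * real ((m + k) choose (m - j)) * (-1)^(m-j)) *
       Beta (real k + \<beta> + real j + 1) (\<mu> + real (m - j) + 1))) {0<..<1}"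
  proof (rule has_integral_sum[OF finite_atLeastAtMost], rule has_integral_mult_right)
    fix j assume "j \<in> {0..m}"
    have "((\<lambda>t. t powr ((real k + \<beta> + real j + 1) - 1) * (1 - t) powr ((\<mu> + real (m - j) + 1) - 1))
        has_integral Beta (real k + \<beta> + real j + 1) (\<mu> + real (m - j) + 1)) {0..1}"
      using assms by (intro has_integral_Beta_real) auto
    then show "((\<lambda>t. t powr ((real k + \<beta> + real j + 1) - 1) * (1 - t) powr ((\<mu> + real (m - j) + 1) - 1))
        has_integral Beta (real k + \<beta> + real j + 1) (\<mu> + real (m - j) + 1)) {0<..<1}"
      by (simp add: has_integral_Icc_iff_Ioo)
  qed
  also have "(\<Sum>j=0..m. (((real m + \<mu>) gchoose j) * real ((m + k) choose (m - j)) * (-1)^(m-j)) *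
       Beta (real k + \<beta> + real j + 1) (\<mu> + real (m - j) + 1)) = (\<beta> gchoose m) * Beta (\<beta> + real k + 1) (\<mu> + real m + 1)"
    using comb_id[OF assms, of m k] by simp
  finally have H: "(?G has_integral ((\<beta> gchoose m) * Beta (\<beta> + real k + 1) (\<mu> + real m + 1))) {0<..<1}" .
  show ?thesis by (subst has_integral_cong[OF cong]) (use H in auto)
qed

lemma gchoose_Gamma:
  fixes \<alpha> :: real
  assumes "real n < \<alpha>"
  shows "(\<alpha> gchoose (n+1)) * fact (n+1) * Gamma (\<alpha> - real n) = Gamma (\<alpha> + 1)"
proof -
  have np: "\<alpha> - real n \<notin> \<int>\<^sub>\<le>\<^sub>0" using assms by (auto dest: nonpos_Ints_nonpos)
  have "(\<alpha> gchoose (n+1)) = pochhammer (\<alpha> - real n) (n+1) / fact (n+1)"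
    by (simp add: gbinomial_pochhammer' algebra_simps)
  moreover have "pochhammer (\<alpha> - real n) (n+1) = Gamma (\<alpha> + 1) / Gamma (\<alpha> - real n)"
    using pochhammer_Gamma[OF np, of "n+1"] by (simp add: algebra_simps)
  moreover have "Gamma (\<alpha> - real n) > 0" using assms by simp
  ultimately show ?thesis by simp
qed

theorem proposition1:
  fixes n k :: nat and \<alpha> \<mu> T t0 :: real and I :: "real set" and x :: "real \<Rightarrow> real"
  assumes "real n < \<alpha>" and "\<alpha> \<le> real n + 1"
    and "\<mu> > -1" and "T > 0"
    and "open I" and "Cn_on n I x"
    and "t0 \<in> I" and "t0 + T \<in> I"
  shows "frac_estimator n \<alpha> k \<mu> T t0 (frac_taylor n \<alpha> x t0) = jumarie_ho n \<alpha> x t0"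
proof -
  define D where "D = jumarie_ho n \<alpha> x t0"
  define c where "c j = (deriv ^^ j) x t0" for j
  define m where "m = n + 1"
  define B where "B = Beta (\<alpha> + real k + 1) (\<mu> + real m + 1)"
  define W where "W \<tau> = jacobi_weight \<mu> k \<tau> * jacobi_shift m \<mu> k \<tau>" for \<tau>
  have apos: "\<alpha> > 0" using assms(1) by linarith
  let ?f = "\<lambda>\<tau>. jacobi_weight \<mu> k \<tau> * jacobi_shift (n + 1) \<mu> k \<tau> * frac_taylor n \<alpha> x t0 (t0 + T * \<tau>)"
  let ?G = "\<lambda>\<tau>. (\<Sum>j=0..n. (T^j / fact j * c j) * (W \<tau> * \<tau> powr real j))
              + (T powr \<alpha> / Gamma (\<alpha> + 1) * D) * (W \<tau> * \<tau> powr \<alpha>)"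
  have cong: "?f \<tau> = ?G \<tau>" if "\<tau> \<in> {0<..<1}" for \<tau>
  proof -
    have tp: "\<tau> > 0" using that by simp
    have "frac_taylor n \<alpha> x t0 (t0 + T * \<tau>) =
          (\<Sum>j=0..n. (T^j / fact j * c j) * \<tau> powr real j) + (T powr \<alpha> / Gamma (\<alpha> + 1) * D) * \<tau> powr \<alpha>"
      unfolding frac_taylor_def D_def c_def
      using tp assms(4) by (simp add: powr_mult powr_realpow power_mult_distrib mult_ac)
    then show ?thesis unfolding W_def m_def by (simp add: sum_distrib_left sum_distrib_right algebra_simps)
  qed
  have Hj: "((\<lambda>\<tau>. W \<tau> * \<tau> powr real j) has_integral 0) {0<..<1}" if "j \<le> n" for j
  proof -
    have "(real j gchoose m) = 0"
      using that by (simp add: m_def binomial_gbinomial[symmetric])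
    then show ?thesis using L[OF assms(3), where \<beta>="real j" and m=m and k=k] unfolding W_def by simp
  qed
  have Ha: "((\<lambda>\<tau>. W \<tau> * \<tau> powr \<alpha>) has_integral ((\<alpha> gchoose m) * B)) {0<..<1}"
    using L[OF assms(3), where \<beta>=\<alpha> and m=m and k=k] apos unfolding W_def B_def by simp
  have "(?G has_integral ((\<Sum>j=0..n. (T^j / fact j * c j) * 0) + (T powr \<alpha> / Gamma (\<alpha> + 1) * D) * ((\<alpha> gchoose m) * B))) {0<..<1}"
    by (intro has_integral_add has_integral_sum has_integral_mult_right Ha Hj) auto
  then have "(?f has_integral ((T powr \<alpha> / Gamma (\<alpha> + 1) * D) * ((\<alpha> gchoose m) * B))) {0<..<1}"
    by (subst has_integral_cong[OF cong]) auto
  then have "(?f has_integral ((T powr \<alpha> / Gamma (\<alpha> + 1) * D) * ((\<alpha> gchoose m) * B))) {0..1}"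
    by (simp add: has_integral_Icc_iff_Ioo)
  then have I: "integral {0..1} ?f = (T powr \<alpha> / Gamma (\<alpha> + 1) * D) * ((\<alpha> gchoose m) * B)"
    by (rule integral_unique)
  have Bpos: "B > 0" unfolding B_def Beta_def using apos assms(3) by (intro divide_pos_pos mult_pos_pos Gamma_real_pos) auto
  have B': "Beta (\<alpha> + 1 + real k) (real n + \<mu> + 2) = B" unfolding B_def m_def by (simp add: algebra_simps)
  have Tp: "T powr \<alpha> > 0" using assms(4) by simp
  have G1: "Gamma (\<alpha> + 1) > 0" using apos by simp
  have key: "(\<alpha> gchoose m) * fact m * Gamma (\<alpha> - real n) = Gamma (\<alpha> + 1)"
    unfolding m_def by (rule gchoose_Gamma[OF assms(1)])
  have "frac_estimator n \<alpha> k \<mu> T t0 (frac_taylor n \<alpha> x t0)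
      = fact m / T powr \<alpha> * (Gamma (\<alpha> - real n) / B) * ((T powr \<alpha> / Gamma (\<alpha> + 1) * D) * ((\<alpha> gchoose m) * B))"
    unfolding frac_estimator_def gamma_const_def I B' m_def ..
  also have "\<dots> = D * (((\<alpha> gchoose m) * fact m * Gamma (\<alpha> - real n)) / Gamma (\<alpha> + 1))"
    using Bpos Tp G1 by (simp add: field_simps)
  also have "\<dots> = D" using key G1 by simp
  finally show ?thesis unfolding D_def .
qed
end
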